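(* Let $(b,c)$ be a connected graph over a countable set $X$, and let $G$ be a nilpotent group acting cocompactly on $X$ such that the Schrödinger operator $H=H_{b,c}$ is $G$-invariant. Fix $x_0\in X$ and let $\mathcal{K}$ be the closure in $C(X)$ (product topology) of $\{f\in\mathcal{H}^+ : f(x_0)=1\}$. Then: (a) every element of $\mathcal{K}$ is $[G,G]$-invariant, where $[G,G]$ is the commutator subgroup of $G$; (b) every extreme point of the convex set $\mathcal{K}$ which is harmonic is multiplicative (i.e. $G$-multiplicative).
   Context: $X$ is a countable set. A graph over $X$ is a pair $(b,c)$ with $b:X\times X\to[0,\infty)$ and $c:X\to\mathbb{R}$ such that $\sum_{y\in X}b(x,y)<\infty$ for all $x$ ($b$ need not be symmetric). The graph is connected if for all $x,z\in X$ there is a finite sequence $x=y_1,\dots,y_n=z$ with $b(y_i,y_{i+1})>0$. $C(X)$ denotes the space of all real functions on $X$ with the product topology (pointwise convergence). $\mathrm{Dom}(H)=\{f\in C(X):\sum_y b(x,y)|f(y)|<\infty \ \forall x\}$ and $Hf(x)=\sum_{y}b(x,y)(f(x)-f(y))+c(x)f(x)$. A function $f\in\mathrm{Dom}(H)$ is harmonic if $Hf=0$; $\mathcal{H}^+$ is the set of nonnegative, not identically zero harmonic functions. For a group $G$ acting on $X$, $T_gf(x)=f(g^{-1}x)$. The action is cocompact if there is a finite $V\subseteq X$ with $GV=X$. $H$ is $G$-invariant if $T_g(\mathrm{Dom}(H))\subseteq\mathrm{Dom}(H)$ and $HT_g=T_gH$ for all $g\in G$. For a subgroup $R\subseteq G$,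 $f$ is $R$-invariant if $T_gf=f$ for all $g\in R$, and $f$ is $R$-multiplicative if there is a group homomorphism $\gamma:R\to(0,\infty)$ (multiplicative group) with $T_gf=\gamma(g^{-1})f$ for all $g\in R$; multiplicative means $G$-multiplicative. *)

theory Defs
  imports "HOL-Analysis.Analysis" "HOL-Algebra.Solvable_Groups" "HOL-Algebra.Group_Action"
begin

definition graph_over :: "('x::countable \<Rightarrow> 'x \<Rightarrow> real) \<Rightarrow> ('x \<Rightarrow> real) \<Rightarrow> bool" where
  "graph_over b c \<longleftrightarrow> (\<forall>x y. 0 \<le> b x y) \<and> (\<forall>x. (\<lambda>y. b x y) summable_on UNIV)"

definition connected_graph :: "('x \<Rightarrow> 'x \<Rightarrow> real) \<Rightarrow> bool" where
  "connected_graph b \<longleftrightarrow> (\<forall>x z. (\<lambda>u v. b u v > 0)\<^sup>*\<^sup>* x z)"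

definition dom_H :: "('x \<Rightarrow> 'x \<Rightarrow> real) \<Rightarrow> ('x \<Rightarrow> real) set" where
  "dom_H b = {f. \<forall>x. (\<lambda>y. b x y * \<bar>f y\<bar>) summable_on UNIV}"

definition schroedinger :: "('x \<Rightarrow> 'x \<Rightarrow> real) \<Rightarrow> ('x \<Rightarrow> real) \<Rightarrow> ('x \<Rightarrow> real) \<Rightarrow> ('x \<Rightarrow> real)" where
  "schroedinger b c f = (\<lambda>x. (\<Sum>\<^sub>\<infinity>y. b x y * (f x - f y)) + c x * f x)"

definition harmonic :: "('x \<Rightarrow> 'x \<Rightarrow> real) \<Rightarrow> ('x \<Rightarrow> real) \<Rightarrow> ('x \<Rightarrow> real) \<Rightarrow> bool" where
  "harmonic b c f \<longleftrightarrow> f \<in> dom_H b \<and> schroedinger b c f = (\<lambda>x. 0)"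

definition pos_harmonic :: "('x \<Rightarrow> 'x \<Rightarrow> real) \<Rightarrow> ('x \<Rightarrow> real) \<Rightarrow> ('x \<Rightarrow> real) set" where
  "pos_harmonic b c = {f. harmonic b c f \<and> (\<forall>x. 0 \<le> f x) \<and> f \<noteq> (\<lambda>x. 0)}"

text \<open>Extreme point of a subset of C(X) (the function space is not a real_vector instance,
  so the standard notion is written out: not an interior point of a segment between two
  distinct points of the set).\<close>
definition extreme_point_fun :: "('x \<Rightarrow> real) \<Rightarrow> ('x \<Rightarrow> real) set \<Rightarrow> bool" where
  "extreme_point_fun f K \<longleftrightarrow> f \<in> K \<and>
     (\<forall>g\<in>K. \<forall>h\<in>K. \<forall>t::real. 0 < t \<and> t < 1 \<and> g \<noteq> h \<longrightarrow> f \<noteq> (\<lambda>x. (1 - t) * g x + t * h x))"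

fun lower_central :: "('g, 'b) monoid_scheme \<Rightarrow> nat \<Rightarrow> 'g set" where
  "lower_central G 0 = carrier G"
| "lower_central G (Suc n) = generate G
     {h1 \<otimes>\<^bsub>G\<^esub> h2 \<otimes>\<^bsub>G\<^esub> inv\<^bsub>G\<^esub> h1 \<otimes>\<^bsub>G\<^esub> inv\<^bsub>G\<^esub> h2 | h1 h2. h1 \<in> carrier G \<and> h2 \<in> lower_central G n}"

definition nilpotent_group :: "('g, 'b) monoid_scheme \<Rightarrow> bool" where
  "nilpotent_group G \<longleftrightarrow> group G \<and> (\<exists>n. lower_central G n = {\<one>\<^bsub>G\<^esub>})"

definition commutator_subgroup :: "('g, 'b) monoid_scheme \<Rightarrow> 'g set" where
  "commutator_subgroup G = derived G (carrier G)"

definition Tg :: "('g, 'b) monoid_scheme \<Rightarrow> ('g \<Rightarrow> 'x \<Rightarrow> 'x) \<Rightarrow> 'g \<Rightarrow> ('x \<Rightarrow> real) \<Rightarrow> ('x \<Rightarrow> real)" where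
  "Tg G \<phi> g f = (\<lambda>x. f (\<phi> (inv\<^bsub>G\<^esub> g) x))"

definition cocompact :: "('g, 'b) monoid_scheme \<Rightarrow> ('g \<Rightarrow> 'x \<Rightarrow> 'x) \<Rightarrow> bool" where
  "cocompact G \<phi> \<longleftrightarrow> (\<exists>V. finite V \<and> (\<Union>g\<in>carrier G. \<phi> g ` V) = UNIV)"

definition H_invariant :: "('g, 'b) monoid_scheme \<Rightarrow> ('g \<Rightarrow> 'x \<Rightarrow> 'x) \<Rightarrow>
    ('x \<Rightarrow> 'x \<Rightarrow> real) \<Rightarrow> ('x \<Rightarrow> real) \<Rightarrow> bool" where
  "H_invariant G \<phi> b c \<longleftrightarrow> (\<forall>g\<in>carrier G.
      Tg G \<phi> g ` dom_H b \<subseteq> dom_H b \<and>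
      (\<forall>f\<in>dom_H b. schroedinger b c (Tg G \<phi> g f) = Tg G \<phi> g (schroedinger b c f)))"

definition R_invariant :: "('g, 'b) monoid_scheme \<Rightarrow> ('g \<Rightarrow> 'x \<Rightarrow> 'x) \<Rightarrow> 'g set \<Rightarrow> ('x \<Rightarrow> real) \<Rightarrow> bool" where
  "R_invariant G \<phi> R f \<longleftrightarrow> (\<forall>g\<in>R. Tg G \<phi> g f = f)"

definition pos_mult_hom :: "('g, 'b) monoid_scheme \<Rightarrow> 'g set \<Rightarrow> ('g \<Rightarrow> real) \<Rightarrow> bool" where
  "pos_mult_hom G R \<gamma> \<longleftrightarrow> (\<forall>g\<in>R. 0 < \<gamma> g) \<and> (\<forall>g\<in>R. \<forall>h\<in>R. \<gamma> (g \<otimes>\<^bsub>G\<^esub> h) = \<gamma> g * \<gamma> h)"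

definition R_multiplicative :: "('g, 'b) monoid_scheme \<Rightarrow> ('g \<Rightarrow> 'x \<Rightarrow> 'x) \<Rightarrow> 'g set \<Rightarrow> ('x \<Rightarrow> real) \<Rightarrow> bool" where
  "R_multiplicative G \<phi> R f \<longleftrightarrow> (\<exists>\<gamma>. pos_mult_hom G R \<gamma> \<and>
      (\<forall>g\<in>R. Tg G \<phi> g f = (\<lambda>x. \<gamma> (inv\<^bsub>G\<^esub> g) * f x)))"

definition multiplicative :: "('g, 'b) monoid_scheme \<Rightarrow> ('g \<Rightarrow> 'x \<Rightarrow> 'x) \<Rightarrow> ('x \<Rightarrow> real) \<Rightarrow> bool" where
  "multiplicative G \<phi> f \<longleftrightarrow> R_multiplicative G \<phi> (carrier G) f"

end

theory Submission
  imports Defs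
begin

locale gsetting =
  fixes b :: "'x::countable \<Rightarrow> 'x \<Rightarrow> real" and c :: "'x \<Rightarrow> real"
  assumes graph: "graph_over b c" and conn: "connected_graph b"
begin

lemma b_nonneg: "0 \<le> b x y" using graph by (simp add: graph_over_def)
lemma b_summable: "(\<lambda>y. b x y) summable_on UNIV" using graph by (simp add: graph_over_def)

lemma domH_summable:
  assumes "f \<in> dom_H b" shows "(\<lambda>y. b x y * f y) summable_on UNIV"
proof -
  have "(\<lambda>y. b x y * \<bar>f y\<bar>) summable_on UNIV" using assms by (simp add: dom_H_def)
  moreover have "(\<lambda>y. norm (b x y * f y)) = (\<lambda>y. b x y * \<bar>f y\<bar>)"
    using b_nonneg by (auto simp: abs_mult)
  ultimately show ?thesis by (subst summable_on_iff_abs_summable_on_real) simp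
qed

lemma H_expand:
  assumes "f \<in> dom_H b"
  shows "schroedinger b c f x = f x * (\<Sum>\<^sub>\<infinity>y. b x y) - (\<Sum>\<^sub>\<infinity>y. b x y * f y) + c x * f x"
proof -
  have s1: "(\<lambda>y. b x y * f x) summable_on UNIV"
    by (rule summable_on_cmult_left[OF b_summable])
  have s2: "(\<lambda>y. - (b x y * f y)) summable_on UNIV"
    using domH_summable[OF assms] by (simp add: summable_on_uminus)
  have "(\<Sum>\<^sub>\<infinity>y. b x y * (f x - f y)) = (\<Sum>\<^sub>\<infinity>y. b x y * f x + - (b x y * f y))"
    by (simp add: algebra_simps)
  also have "\<dots> = (\<Sum>\<^sub>\<infinity>y. b x y * f x) + (\<Sum>\<^sub>\<infinity>y. - (b x y * f y))"
    by (rule infsum_add[OF s1 s2])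
  also have "\<dots> = f x * (\<Sum>\<^sub>\<infinity>y. b x y) - (\<Sum>\<^sub>\<infinity>y. b x y * f y)"
    by (subst infsum_cmult_left[OF b_summable]) (simp add: infsum_uminus mult.commute)
  finally show ?thesis by (simp add: schroedinger_def)
qed

lemma harmonic_sum:
  assumes "harmonic b c f"
  shows "(\<Sum>\<^sub>\<infinity>y. b x y * f y) = f x * ((\<Sum>\<^sub>\<infinity>y. b x y) + c x)"
proof -
  have "schroedinger b c f x = 0" using assms by (simp add: harmonic_def)
  then show ?thesis using H_expand[of f x] assms by (simp add: harmonic_def algebra_simps)
qed

lemma harmonic_lin:
  assumes "harmonic b c f" "harmonic b c g"
  shows "harmonic b c (\<lambda>x. \<alpha> * f x + \<beta> * g x)"
proof -
  have df: "f \<in> dom_H b" and dg: "g \<in> dom_H b" using assms by (auto simp: harmonic_def)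
  have dh: "(\<lambda>x. \<alpha> * f x + \<beta> * g x) \<in> dom_H b"
    unfolding dom_H_def
  proof (safe)
    fix x
    have "(\<lambda>y. \<bar>\<alpha>\<bar> * (b x y * \<bar>f y\<bar>) + \<bar>\<beta>\<bar> * (b x y * \<bar>g y\<bar>)) summable_on UNIV"
      using df dg by (intro summable_on_add summable_on_cmult_right) (auto simp: dom_H_def)
    then show "(\<lambda>y. b x y * \<bar>\<alpha> * f y + \<beta> * g y\<bar>) summable_on UNIV"
    proof (rule summable_on_comparison_test)
      fix y
      have "\<bar>\<alpha> * f y + \<beta> * g y\<bar> \<le> \<bar>\<alpha>\<bar> * \<bar>f y\<bar> + \<bar>\<beta>\<bar> * \<bar>g y\<bar>"
        using abs_triangle_ineq[of "\<alpha> * f y" "\<beta> * g y"] by (simp add: abs_mult)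
      from mult_left_mono[OF this b_nonneg[of x y]]
      show "b x y * \<bar>\<alpha> * f y + \<beta> * g y\<bar> \<le> \<bar>\<alpha>\<bar> * (b x y * \<bar>f y\<bar>) + \<bar>\<beta>\<bar> * (b x y * \<bar>g y\<bar>)"
        by (simp add: algebra_simps)
      show "0 \<le> b x y * \<bar>\<alpha> * f y + \<beta> * g y\<bar>" using b_nonneg by simp
    qed
  qed
  have "schroedinger b c (\<lambda>x. \<alpha> * f x + \<beta> * g x) x = 0" for x
  proof -
    have "(\<Sum>\<^sub>\<infinity>y. b x y * (\<alpha> * f y + \<beta> * g y)) = (\<Sum>\<^sub>\<infinity>y. \<alpha> * (b x y * f y) + \<beta> * (b x y * g y))"
      by (simp add: algebra_simps)
    also have "\<dots> = (\<Sum>\<^sub>\<infinity>y. \<alpha> * (b x y * f y)) + (\<Sum>\<^sub>\<infinity>y. \<beta> * (b x y * g y))"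
      by (rule infsum_add; rule summable_on_cmult_right; rule domH_summable; fact)
    also have "\<dots> = \<alpha> * (\<Sum>\<^sub>\<infinity>y. b x y * f y) + \<beta> * (\<Sum>\<^sub>\<infinity>y. b x y * g y)"
      by (simp only: infsum_cmult_right[OF domH_summable[OF df]] infsum_cmult_right[OF domH_summable[OF dg]])
    finally have e: "(\<Sum>\<^sub>\<infinity>y. b x y * (\<alpha> * f y + \<beta> * g y)) = \<alpha> * (\<Sum>\<^sub>\<infinity>y. b x y * f y) + \<beta> * (\<Sum>\<^sub>\<infinity>y. b x y * g y)" .
    show ?thesis
      unfolding H_expand[OF dh] e harmonic_sum[OF assms(1)] harmonic_sum[OF assms(2)]
      by (simp add: algebra_simps)
  qed
  then show ?thesis using dh by (auto simp: harmonic_def)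
qed

lemma zero_prop:
  assumes "harmonic b c f" "\<forall>x. 0 \<le> f x" "f y = 0" "0 < b y z"
  shows "f z = 0"
proof -
  have df: "f \<in> dom_H b" using assms by (simp add: harmonic_def)
  have "(\<Sum>\<^sub>\<infinity>w. b y w * f w) \<le> 0" using harmonic_sum[OF assms(1), of y] assms(3) by simp
  from nonneg_infsum_le_0D[OF this domH_summable[OF df]] have "b y z * f z = 0"
    using assms(2) b_nonneg by auto
  then show ?thesis using assms(4) by simp
qed

lemma pos_harmonic_pos:
  assumes "f \<in> pos_harmonic b c" shows "0 < f x"
proof (rule ccontr)
  assume "\<not> 0 < f x"
  have h: "harmonic b c f" and nn: "\<forall>x. 0 \<le> f x" and nz: "f \<noteq> (\<lambda>x. 0)"
    using assms by (auto simp: pos_harmonic_def)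
  have fx: "f x = 0" using nn[rule_format, of x] \<open>\<not> 0 < f x\<close> by linarith
  have "f z = 0" for z
  proof -
    have "(\<lambda>u v. b u v > 0)\<^sup>*\<^sup>* x z" using conn by (simp add: connected_graph_def)
    then show ?thesis
    proof (induction rule: rtranclp_induct)
      case base then show ?case using fx .
    next
      case (step y z) then show ?case using zero_prop[OF h nn] by blast
    qed
  qed
  then show False using nz by auto
qed

lemma harnack_edge:
  assumes "harmonic b c f" "\<forall>x. 0 \<le> f x" "0 < b x y"
  shows "f y \<le> ((\<bar>\<Sum>\<^sub>\<infinity>z. b x z\<bar> + \<bar>c x\<bar>) / b x y) * f x"
proof -
  have df: "f \<in> dom_H b" using assms by (simp add: harmonic_def)
  have "b x y * f y = (\<Sum>\<^sub>\<infinity>z\<in>{y}. b x z * f z)" by simp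
  also have "\<dots> \<le> (\<Sum>\<^sub>\<infinity>z. b x z * f z)"
  proof (rule infsum_mono_neutral)
    show "(\<lambda>z. b x z * f z) summable_on UNIV" by (rule domH_summable[OF df])
    show "0 \<le> b x z * f z" for z using assms(2) b_nonneg[of x z] by simp
  qed auto
  also have "\<dots> = f x * ((\<Sum>\<^sub>\<infinity>y. b x y) + c x)" by (rule harmonic_sum[OF assms(1)])
  also have "\<dots> \<le> f x * (\<bar>\<Sum>\<^sub>\<infinity>z. b x z\<bar> + \<bar>c x\<bar>)"
    using assms(2) by (intro mult_left_mono) auto
  finally have "b x y * f y \<le> f x * (\<bar>\<Sum>\<^sub>\<infinity>z. b x z\<bar> + \<bar>c x\<bar>)" .
  then have "f y * b x y \<le> (\<bar>\<Sum>\<^sub>\<infinity>z. b x z\<bar> + \<bar>c x\<bar>) * f x" by (simp add: mult.commute)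
  then have "f y \<le> ((\<bar>\<Sum>\<^sub>\<infinity>z. b x z\<bar> + \<bar>c x\<bar>) * f x) / b x y"
    using assms(3) by (simp add: pos_le_divide_eq)
  then show ?thesis by simp
qed

lemma harnack:
  "\<exists>C\<ge>0. \<forall>f. harmonic b c f \<and> (\<forall>x. 0 \<le> f x) \<longrightarrow> f y \<le> C * f x"
proof -
  have "(\<lambda>u v. b u v > 0)\<^sup>*\<^sup>* x y" using conn by (simp add: connected_graph_def)
  then show ?thesis
  proof (induction rule: rtranclp_induct)
    case base then show ?case by (intro exI[of _ 1]) auto
  next
    case (step y z)
    then obtain C where C: "C \<ge> 0" "\<forall>f. harmonic b c f \<and> (\<forall>x. 0 \<le> f x) \<longrightarrow> f y \<le> C * f x" by blast
    define D where "D = (\<bar>\<Sum>\<^sub>\<infinity>w. b y w\<bar> + \<bar>c y\<bar>) / b y z"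
    have D: "D \<ge> 0" using step(2) by (simp add: D_def)
    show ?case
    proof (intro exI[of _ "D * C"] conjI allI impI)
      show "0 \<le> D * C" using C D by simp
      fix f assume f: "harmonic b c f \<and> (\<forall>x. 0 \<le> f x)"
      have "f z \<le> D * f y" using harnack_edge[of f y z] f step(2) by (simp add: D_def)
      also have "\<dots> \<le> D * (C * f x)" using C f D by (intro mult_left_mono) auto
      finally show "f z \<le> D * C * f x" by simp
    qed
  qed
qed

end

locale nsetting = gsetting b c for b :: "'x::countable \<Rightarrow> 'x \<Rightarrow> real" and c :: "'x \<Rightarrow> real" +
  fixes G :: "('g, 'z) monoid_scheme" and \<phi> :: "'g \<Rightarrow> 'x \<Rightarrow> 'x"
  assumes nil: "nilpotent_group G" and act: "group_action G UNIV \<phi>"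
    and coc: "cocompact G \<phi>" and hinv: "H_invariant G \<phi> b c"
begin

lemma grp: "group G" using nil by (simp add: nilpotent_group_def)

abbreviation T where "T \<equiv> Tg G \<phi>"
abbreviation P where "P \<equiv> pos_harmonic b c"

lemma inv_cl: "g \<in> carrier G \<Longrightarrow> inv\<^bsub>G\<^esub> g \<in> carrier G"
  by (rule group.inv_closed[OF grp])
lemma m_cl: "g \<in> carrier G \<Longrightarrow> h \<in> carrier G \<Longrightarrow> g \<otimes>\<^bsub>G\<^esub> h \<in> carrier G"
  by (rule monoid.m_closed[OF group.is_monoid[OF grp]])

lemma phi_mult: "g \<in> carrier G \<Longrightarrow> h \<in> carrier G \<Longrightarrow> \<phi> (g \<otimes>\<^bsub>G\<^esub> h) x = \<phi> g (\<phi> h x)"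
  using group_action.composition_rule[OF act] by simp

lemma phi_one: "\<phi> \<one>\<^bsub>G\<^esub> x = x"
proof -
  have "\<phi> \<one>\<^bsub>G\<^esub> = (\<lambda>x\<in>UNIV. x)" using group_action.id_eq_one[OF act] by simp
  then show ?thesis by simp
qed

lemma T_mult: "g \<in> carrier G \<Longrightarrow> h \<in> carrier G \<Longrightarrow> T (g \<otimes>\<^bsub>G\<^esub> h) f = T g (T h f)"
  unfolding Tg_def by (simp add: group.inv_mult_group[OF grp] phi_mult inv_cl)

lemma T_one: "T \<one>\<^bsub>G\<^esub> f = f"
  unfolding Tg_def by (simp add: monoid.inv_one[OF group.is_monoid[OF grp]] phi_one)

lemma T_inv_cancel: "g \<in> carrier G \<Longrightarrow> T (inv\<^bsub>G\<^esub> g) (T g f) = f"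
  using T_mult[of "inv\<^bsub>G\<^esub> g" g f, symmetric] inv_cl[of g] group.l_inv[OF grp, of g] T_one by simp

lemma T_inv_cancel2: "g \<in> carrier G \<Longrightarrow> T g (T (inv\<^bsub>G\<^esub> g) f) = f"
  using T_mult[of g "inv\<^bsub>G\<^esub> g" f, symmetric] inv_cl[of g] group.r_inv[OF grp, of g] T_one by simp

lemma T_scale: "T g (\<lambda>x. r * f x) = (\<lambda>x. r * T g f x)"
  by (simp add: Tg_def)

lemma T_apply: "T g f x = f (\<phi> (inv\<^bsub>G\<^esub> g) x)"
  by (simp add: Tg_def)

lemma T_harmonic: assumes "g \<in> carrier G" "harmonic b c f" shows "harmonic b c (T g f)"
proof -
  have d: "f \<in> dom_H b" and s: "schroedinger b c f = (\<lambda>x. 0)" using assms(2) by (auto simp: harmonic_def)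
  have hi: "T g ` dom_H b \<subseteq> dom_H b \<and> (\<forall>f\<in>dom_H b. schroedinger b c (T g f) = T g (schroedinger b c f))"
    using bspec[OF hinv[unfolded H_invariant_def] assms(1)] by simp
  have "T g f \<in> dom_H b" using hi d by (simp add: image_subset_iff)
  moreover have "schroedinger b c (T g f) = T g (schroedinger b c f)"
    using hi d by simp
  ultimately show ?thesis using s by (simp add: harmonic_def Tg_def)
qed

lemma T_pos: assumes "g \<in> carrier G" "f \<in> P" shows "T g f \<in> P"
proof -
  have h: "harmonic b c f" and nn: "\<forall>x. 0 \<le> f x" and nz: "f \<noteq> (\<lambda>x. 0)"
    using assms(2) by (auto simp: pos_harmonic_def)
  obtain y where y: "f y \<noteq> 0" using nz by auto
  have "T g f (\<phi> g y) = f y"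
    by (simp add: T_apply phi_mult[symmetric] assms(1) inv_cl group.l_inv[OF grp] phi_one)
  then have "T g f \<noteq> (\<lambda>x. 0)" using y by auto
  then show ?thesis using T_harmonic[OF assms(1) h] nn by (simp add: pos_harmonic_def T_apply)
qed

lemma lc_subgroup: "subgroup (lower_central G n) G"
proof (induction n)
  case 0 then show ?case using group.subgroup_self[OF grp] by simp
next
  case (Suc n)
  have "{h1 \<otimes>\<^bsub>G\<^esub> h2 \<otimes>\<^bsub>G\<^esub> inv\<^bsub>G\<^esub> h1 \<otimes>\<^bsub>G\<^esub> inv\<^bsub>G\<^esub> h2 | h1 h2. h1 \<in> carrier G \<and> h2 \<in> lower_central G n} \<subseteq> carrier G"
    using subgroup.subset[OF Suc.IH] by (auto intro!: m_cl inv_cl)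
  then show ?case by (simp add: group.generate_is_subgroup[OF grp])
qed

lemma lc_carrier: "g \<in> lower_central G n \<Longrightarrow> g \<in> carrier G"
  by (rule subgroup.mem_carrier[OF lc_subgroup])

lemma lc_gen: "h1 \<in> carrier G \<Longrightarrow> h2 \<in> lower_central G n \<Longrightarrow>
   h1 \<otimes>\<^bsub>G\<^esub> h2 \<otimes>\<^bsub>G\<^esub> inv\<^bsub>G\<^esub> h1 \<otimes>\<^bsub>G\<^esub> inv\<^bsub>G\<^esub> h2 \<in> lower_central G (Suc n)"
  unfolding lower_central.simps by (rule generate.incl) (rule CollectI, rule exI, rule exI, rule conjI[OF refl], rule conjI)

lemma T_generate:
  assumes "\<And>s. s \<in> S \<Longrightarrow> s \<in> carrier G \<and> T s f = f" "g \<in> generate G S"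
  shows "T g f = f"
  using assms(2)
proof (induction rule: generate.induct)
  case one then show ?case by (rule T_one)
next
  case (incl h) then show ?case using assms(1) by simp
next
  case (inv h)
  then have "h \<in> carrier G" "T h f = f" using assms(1) by auto
  then show ?case using T_inv_cancel[of h f] by simp
next
  case (eng h1 h2)
  have "S \<subseteq> carrier G" using assms(1) by auto
  then have sg: "subgroup (generate G S) G" by (rule group.generate_is_subgroup[OF grp])
  have "h1 \<in> carrier G" "h2 \<in> carrier G"
    using subgroup.mem_carrier[OF sg eng.hyps(1)] subgroup.mem_carrier[OF sg eng.hyps(2)] .
  then show ?case using eng.IH T_mult by simp
qed

lemma lc_T_generate:
  assumes "\<And>h1 h2. h1 \<in> carrier G \<Longrightarrow> h2 \<in> lower_central G n \<Longrightarrow>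
     T (h1 \<otimes>\<^bsub>G\<^esub> h2 \<otimes>\<^bsub>G\<^esub> inv\<^bsub>G\<^esub> h1 \<otimes>\<^bsub>G\<^esub> inv\<^bsub>G\<^esub> h2) f = f"
    and "g \<in> lower_central G (Suc n)"
  shows "T g f = f"
proof (rule T_generate)
  show "g \<in> generate G {h1 \<otimes>\<^bsub>G\<^esub> h2 \<otimes>\<^bsub>G\<^esub> inv\<^bsub>G\<^esub> h1 \<otimes>\<^bsub>G\<^esub> inv\<^bsub>G\<^esub> h2 | h1 h2. h1 \<in> carrier G \<and> h2 \<in> lower_central G n}"
    using assms(2) by simp
  fix s assume "s \<in> {h1 \<otimes>\<^bsub>G\<^esub> h2 \<otimes>\<^bsub>G\<^esub> inv\<^bsub>G\<^esub> h1 \<otimes>\<^bsub>G\<^esub> inv\<^bsub>G\<^esub> h2 | h1 h2. h1 \<in> carrier G \<and> h2 \<in> lower_central G n}"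
  then obtain h1 h2 where h: "h1 \<in> carrier G" "h2 \<in> lower_central G n"
    and s: "s = h1 \<otimes>\<^bsub>G\<^esub> h2 \<otimes>\<^bsub>G\<^esub> inv\<^bsub>G\<^esub> h1 \<otimes>\<^bsub>G\<^esub> inv\<^bsub>G\<^esub> h2" by auto
  show "s \<in> carrier G \<and> T s f = f"
    using lc_carrier[OF lc_gen[OF h]] assms(1)[OF h] s by simp
qed

lemma lc_one_step: assumes "lower_central G n = {\<one>\<^bsub>G\<^esub>}" shows "lower_central G (Suc n) = {\<one>\<^bsub>G\<^esub>}"
proof -
  have "{h1 \<otimes>\<^bsub>G\<^esub> h2 \<otimes>\<^bsub>G\<^esub> inv\<^bsub>G\<^esub> h1 \<otimes>\<^bsub>G\<^esub> inv\<^bsub>G\<^esub> h2 | h1 h2. h1 \<in> carrier G \<and> h2 \<in> lower_central G n} \<subseteq> {\<one>\<^bsub>G\<^esub>}"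
  proof
    fix s assume "s \<in> {h1 \<otimes>\<^bsub>G\<^esub> h2 \<otimes>\<^bsub>G\<^esub> inv\<^bsub>G\<^esub> h1 \<otimes>\<^bsub>G\<^esub> inv\<^bsub>G\<^esub> h2 | h1 h2. h1 \<in> carrier G \<and> h2 \<in> lower_central G n}"
    then obtain h1 h2 where h: "h1 \<in> carrier G" "h2 \<in> lower_central G n"
      and s: "s = h1 \<otimes>\<^bsub>G\<^esub> h2 \<otimes>\<^bsub>G\<^esub> inv\<^bsub>G\<^esub> h1 \<otimes>\<^bsub>G\<^esub> inv\<^bsub>G\<^esub> h2" by auto
    have "h2 = \<one>\<^bsub>G\<^esub>" using h(2) assms by simp
    then show "s \<in> {\<one>\<^bsub>G\<^esub>}"
      using s h(1) by (simp add: group.r_inv[OF grp] monoid.inv_one[OF group.is_monoid[OF grp]] group.is_monoid[OF grp])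
  qed
  then have "lower_central G (Suc n) \<subseteq> {\<one>\<^bsub>G\<^esub>}"
    using group.generate_subgroup_incl[OF grp _ group.triv_subgroup[OF grp]] by simp
  moreover have "\<one>\<^bsub>G\<^esub> \<in> lower_central G (Suc n)" by (rule subgroup.one_closed[OF lc_subgroup])
  ultimately show ?thesis by auto
qed

lemma lc_trivial_ge: assumes "lower_central G n = {\<one>\<^bsub>G\<^esub>}" shows "lower_central G (n + k) = {\<one>\<^bsub>G\<^esub>}"
proof (induction k)
  case 0 then show ?case using assms by simp
next
  case (Suc k) then show ?case using lc_one_step[of "n + k"] by simp
qed

lemma comm_eq: "commutator_subgroup G = lower_central G 1"
proof -
  have "derived_set G (carrier G) = {h1 \<otimes>\<^bsub>G\<^esub> h2 \<otimes>\<^bsub>G\<^esub> inv\<^bsub>G\<^esub> h1 \<otimes>\<^bsub>G\<^esub> inv\<^bsub>G\<^esub> h2 | h1 h2. h1 \<in> carrier G \<and> h2 \<in> lower_central G 0}"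
    by (simp add: set_eq_iff) blast
  then show ?thesis by (simp add: commutator_subgroup_def derived_def)
qed

end

lemma eval_cont[continuous_intros]: "continuous_on S (\<lambda>f::'a \<Rightarrow> 'b::topological_space. f y)"
  by (rule continuous_on_subset[OF continuous_on_product_coordinates]) simp

definition amax :: "('a \<Rightarrow> real) set \<Rightarrow> (('a \<Rightarrow> real) \<Rightarrow> real) \<Rightarrow> ('a \<Rightarrow> real) set" where
  "amax A F = {f\<in>A. \<forall>g\<in>A. F g \<le> F f}"

lemma amax_compact:
  assumes "compact A" "A \<noteq> {}" "continuous_on UNIV F"
  shows "compact (amax A F) \<and> amax A F \<noteq> {}"
proof
  have "amax A F = A \<inter> (\<Inter>g\<in>A. {f. F g \<le> F f})" by (auto simp: amax_def)
  moreover have "closed (\<Inter>g\<in>A. {f. F g \<le> F f})"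
    using assms(3) by (intro closed_INT ballI closed_Collect_le continuous_on_const) auto
  ultimately show "compact (amax A F)" using compact_Int_closed assms(1) by auto
  show "amax A F \<noteq> {}"
    using continuous_attains_sup[OF assms(1,2) continuous_on_subset[OF assms(3)]] by (auto simp: amax_def)
qed

lemma amax_face:
  assumes "p \<in> amax A F" "g \<in> A" "h \<in> A" "F p = (1 - t) * F g + t * F h" "0 < t" "t < 1"
  shows "g \<in> amax A F \<and> h \<in> amax A F"
proof -
  have "F g \<le> F p" "F h \<le> F p" using assms(1-3) by (auto simp: amax_def)
  then have "F g = F p \<and> F h = F p"
  proof -
    have "(1 - t) * F g \<le> (1 - t) * F p" "t * F h \<le> t * F p"
      using \<open>F g \<le> F p\<close> \<open>F h \<le> F p\<close> assms(5,6) by (auto intro: mult_left_mono)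
    have e: "(1 - t) * F p + t * F p = F p" by (simp add: algebra_simps)
    have "F g = F p"
    proof (rule ccontr)
      assume "F g \<noteq> F p" then have "F g < F p" using \<open>F g \<le> F p\<close> by simp
      then have "(1 - t) * F g < (1 - t) * F p" using assms(6) by simp
      then show False using e assms(4) \<open>t * F h \<le> t * F p\<close> by linarith
    qed
    moreover have "F h = F p"
    proof (rule ccontr)
      assume "F h \<noteq> F p" then have "F h < F p" using \<open>F h \<le> F p\<close> by simp
      then have "t * F h < t * F p" using assms(5) by simp
      then show False using e assms(4) \<open>(1 - t) * F g \<le> (1 - t) * F p\<close> by linarith
    qed
    ultimately show ?thesis by simp
  qed
  then show ?thesis using assms(1-3) by (auto simp: amax_def)
qed

lemma bauer:
  fixes K' :: "('x::countable \<Rightarrow> real) set"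
  assumes cK: "compact K'" and ext: "\<And>u. extreme_point_fun u K' \<Longrightarrow> u y \<le> u x" and f: "f \<in> K'"
  shows "f y \<le> f x"
proof -
  define L where "L = (\<lambda>f::'x\<Rightarrow>real. f y - f x)"
  have contL: "continuous_on UNIV L" unfolding L_def by (intro continuous_intros)
  define S where "S = rec_nat (amax K' L) (\<lambda>n A. amax A (\<lambda>f. f (from_nat n)))"
  have S0: "S 0 = amax K' L" and SS: "S (Suc n) = amax (S n) (\<lambda>f. f (from_nat n))" for n
    by (simp_all add: S_def)
  have Kne: "K' \<noteq> {}" using f by auto
  have Sc: "compact (S n) \<and> S n \<noteq> {}" for n
  proof (induction n)
    case 0 then show ?case using amax_compact[OF cK Kne contL] by (simp add: S0)
  next
    case (Suc n) then show ?case using amax_compact[of "S n" "\<lambda>f. f (from_nat n)"] by (simp add: SS)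
  qed
  have Ssub: "S (Suc n) \<subseteq> S n" for n by (auto simp: SS amax_def)
  have Smono: "S n \<subseteq> S m" if "m \<le> n" for m n
    using that
  proof (induction n rule: dec_induct)
    case base then show ?case by simp
  next
    case (step n) then show ?case using Ssub[of n] by simp
  qed
  have "S 0 \<inter> \<Inter>(range S) \<noteq> {}"
  proof (rule compact_imp_fip)
    show "compact (S 0)" using Sc by simp
    show "closed T" if "T \<in> range S" for T using that Sc compact_imp_closed by auto
    fix F' assume F': "finite F'" "F' \<subseteq> range S"
    then obtain I where I: "finite I" "F' = S ` I" by (meson finite_subset_image)
    define N where "N = Max (insert 0 I)"
    have "S N \<subseteq> S 0 \<inter> \<Inter>F'"
    proof -
      have "S N \<subseteq> S i" if "i \<in> insert 0 I" for i
        using Smono[of i N] that I(1) by (simp add: N_def)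
      then show ?thesis using I(2) by auto
    qed
    moreover have "S N \<noteq> {}" using Sc by simp
    ultimately show "S 0 \<inter> \<Inter>F' \<noteq> {}" by blast
  qed
  then obtain p where p: "\<And>n. p \<in> S n" by auto
  have pK: "p \<in> K'" using p[of 0] by (simp add: S0 amax_def)
  have "extreme_point_fun p K'"
    unfolding extreme_point_fun_def
  proof (intro conjI pK ballI allI impI)
    fix g h and t :: real assume g: "g \<in> K'" and h: "h \<in> K'" and tt: "0 < t \<and> t < 1 \<and> g \<noteq> h"
    show "p \<noteq> (\<lambda>x. (1 - t) * g x + t * h x)"
    proof
      assume pe: "p = (\<lambda>x. (1 - t) * g x + t * h x)"
      have key: "g \<in> S n \<and> h \<in> S n" for n
      proof (induction n)
        case 0
        have "L p = (1 - t) * L g + t * L h" by (simp add: pe L_def algebra_simps)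
        then show ?case using amax_face[of p K' L g h t] p[of 0] g h tt by (simp add: S0)
      next
        case (Suc n)
        have "p (from_nat n) = (1 - t) * g (from_nat n) + t * h (from_nat n)" by (simp add: pe)
        then show ?case using amax_face[of p "S n" "\<lambda>f. f (from_nat n)" g h t] p[of "Suc n"] Suc tt
          by (simp add: SS)
      qed
      have "g z = h z" for z
      proof -
        have "g \<in> S (Suc (to_nat z))" "h \<in> S (Suc (to_nat z))" using key by auto
        then have "h z \<le> g z" "g z \<le> h z"
          by (auto simp: SS amax_def)
        then show ?thesis by simp
      qed
      then show False using tt by auto
    qed
  qed
  then have "L p \<le> 0" using ext by (simp add: L_def)
  moreover have "L f \<le> L p" using p[of 0] f by (simp add: S0 amax_def)
  ultimately show ?thesis by (simp add: L_def)
qed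

lemma compact_box:
  fixes B :: "'x \<Rightarrow> real"
  shows "compact {f::'x\<Rightarrow>real. \<forall>y. 0 \<le> f y \<and> f y \<le> B y}"
proof -
  have "compactin (product_topology (\<lambda>_. euclidean) UNIV) (PiE UNIV (\<lambda>y. {0..B y}))"
    by (simp add: compactin_PiE)
  moreover have "PiE UNIV (\<lambda>y. {0..B y}) = {f::'x\<Rightarrow>real. \<forall>y. 0 \<le> f y \<and> f y \<le> B y}"
    by (auto simp: PiE_iff)
  ultimately show ?thesis
    by (simp add: euclidean_product_topology compactin_euclidean_iff)
qed

lemma closed_lin_le: "closed {f::'x\<Rightarrow>real. f y \<le> C * f x}"
  by (intro closed_Collect_le continuous_intros)

lemma closed_eval_ge: "closed {f::'x\<Rightarrow>real. 0 \<le> f y}"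
  by (intro closed_Collect_le continuous_intros)

lemma closed_eval_eq: "closed {f::'x\<Rightarrow>real. f y = 1}"
  by (intro closed_Collect_eq continuous_intros)

locale ksetting = nsetting b c G \<phi>
  for b :: "'x::countable \<Rightarrow> 'x \<Rightarrow> real" and c :: "'x \<Rightarrow> real"
    and G :: "('g, 'z) monoid_scheme" and \<phi> :: "'g \<Rightarrow> 'x \<Rightarrow> 'x" +
  fixes x0 :: 'x
begin

definition P1 where "P1 = {f \<in> P. f x0 = 1}"
definition K where "K = closure P1"

lemma P1_K: "P1 \<subseteq> K" unfolding K_def by (rule closure_subset)

lemma K_minimal: "closed S \<Longrightarrow> P1 \<subseteq> S \<Longrightarrow> K \<subseteq> S"
  unfolding K_def by (rule closure_minimal)

lemma P_harm: "f \<in> P \<Longrightarrow> harmonic b c f \<and> (\<forall>x. 0 \<le> f x)"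
  by (simp add: pos_harmonic_def)

lemma harnack2: "\<exists>C\<ge>0. \<forall>f\<in>P. \<forall>a\<in>carrier G. f (\<phi> a y) \<le> C * f (\<phi> a x)"
proof -
  obtain C where C: "C \<ge> 0" "\<forall>f. harmonic b c f \<and> (\<forall>x. 0 \<le> f x) \<longrightarrow> f y \<le> C * f x"
    using harnack[of y x] by blast
  have "f (\<phi> a y) \<le> C * f (\<phi> a x)" if f: "f \<in> P" and a: "a \<in> carrier G" for f a
  proof -
    have ia: "inv\<^bsub>G\<^esub> a \<in> carrier G" using inv_cl[OF a] .
    have "T (inv\<^bsub>G\<^esub> a) f \<in> P" using T_pos[OF ia f] .
    then have "T (inv\<^bsub>G\<^esub> a) f y \<le> C * T (inv\<^bsub>G\<^esub> a) f x" using C(2) P_harm by simp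
    then show ?thesis using a by (simp add: T_apply group.inv_inv[OF grp])
  qed
  then show ?thesis using C(1) by (intro exI[of _ C]) simp
qed

lemma K_harnack:
  obtains C where "C \<ge> 0" "\<And>u a. u \<in> K \<Longrightarrow> a \<in> carrier G \<Longrightarrow> u (\<phi> a y) \<le> C * u (\<phi> a x)"
proof -
  obtain C where C: "C \<ge> 0" "\<forall>f\<in>P. \<forall>a\<in>carrier G. f (\<phi> a y) \<le> C * f (\<phi> a x)"
    using harnack2[of y x] by blast
  have "K \<subseteq> (\<Inter>a\<in>carrier G. {f. f (\<phi> a y) \<le> C * f (\<phi> a x)})"
  proof (rule K_minimal)
    show "closed (\<Inter>a\<in>carrier G. {f. f (\<phi> a y) \<le> C * f (\<phi> a x)})"
      by (intro closed_INT ballI closed_lin_le)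
    show "P1 \<subseteq> (\<Inter>a\<in>carrier G. {f. f (\<phi> a y) \<le> C * f (\<phi> a x)})"
      using C(2) by (auto simp: P1_def)
  qed
  then have "\<And>u a. u \<in> K \<Longrightarrow> a \<in> carrier G \<Longrightarrow> u (\<phi> a y) \<le> C * u (\<phi> a x)" by auto
  then show ?thesis by (rule that[OF C(1)])
qed

lemma K_x0: "u \<in> K \<Longrightarrow> u x0 = 1"
  using K_minimal[OF closed_eval_eq[of x0]] by (auto simp: P1_def)

lemma K_nonneg: "u \<in> K \<Longrightarrow> 0 \<le> u y"
  using K_minimal[OF closed_eval_ge[of y]] by (auto simp: P1_def pos_harmonic_def)

lemma one_cl: "\<one>\<^bsub>G\<^esub> \<in> carrier G"
  by (rule monoid.one_closed[OF group.is_monoid[OF grp]])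

lemma K_pos: assumes "u \<in> K" shows "0 < u y"
proof -
  obtain C where C: "C \<ge> 0" "\<And>u a. u \<in> K \<Longrightarrow> a \<in> carrier G \<Longrightarrow> u (\<phi> a x0) \<le> C * u (\<phi> a y)"
    using K_harnack[of x0 y] by blast
  have "1 \<le> C * u y" using C(2)[OF assms one_cl] K_x0[OF assms] by (simp add: phi_one)
  moreover have "0 \<le> u y" using K_nonneg[OF assms] .
  ultimately show ?thesis by (cases "u y = 0") auto
qed

lemma K_bound: obtains B where "\<And>u y. u \<in> K \<Longrightarrow> u y \<le> B y"
proof -
  have "\<exists>B. \<forall>u\<in>K. u y \<le> B" for y
  proof -
    obtain C where C: "C \<ge> 0" "\<And>u a. u \<in> K \<Longrightarrow> a \<in> carrier G \<Longrightarrow> u (\<phi> a y) \<le> C * u (\<phi> a x0)"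
      using K_harnack[of y x0] by blast
    have "u y \<le> C" if "u \<in> K" for u using C(2)[OF that one_cl] K_x0[OF that] by (simp add: phi_one)
    then show ?thesis by (intro exI[of _ C]) simp
  qed
  then have "\<forall>y. \<exists>B. \<forall>u\<in>K. u y \<le> B" by simp
  then obtain B where B: "\<forall>y. \<forall>u\<in>K. u y \<le> B y" by (metis choice)
  show ?thesis by (rule that[of B]) (use B in simp)
qed

lemma K_closed: "closed K" unfolding K_def by simp

lemma K_compact: "compact K"
proof -
  obtain B where B: "\<And>u y. u \<in> K \<Longrightarrow> u y \<le> B y" using K_bound by blast
  have "K = {f::'x\<Rightarrow>real. \<forall>y. 0 \<le> f y \<and> f y \<le> B y} \<inter> K"
    using B K_nonneg by auto
  then show ?thesis using compact_Int_closed[OF compact_box K_closed, of B] by simp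
qed

definition nrm :: "('x \<Rightarrow> real) \<Rightarrow> ('x \<Rightarrow> real)" where "nrm h = (\<lambda>x. h x / h x0)"

lemma nrm_P1:
  assumes "harmonic b c h" "\<forall>x. 0 \<le> h x" "0 < h x0"
  shows "nrm h \<in> P1"
proof -
  have "harmonic b c (\<lambda>x. (1 / h x0) * h x + 0 * h x)" by (rule harmonic_lin[OF assms(1) assms(1)])
  moreover have "(\<lambda>x. (1 / h x0) * h x + 0 * h x) = nrm h" by (simp add: nrm_def fun_eq_iff)
  ultimately have "harmonic b c (nrm h)" by simp
  moreover have "nrm h x0 = 1" using assms(3) by (simp add: nrm_def)
  moreover have "\<forall>x. 0 \<le> nrm h x" using assms(2,3) by (simp add: nrm_def)
  ultimately show ?thesis by (auto simp: P1_def pos_harmonic_def)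
qed

end

context ksetting begin

lemma dominate:
  assumes ext: "extreme_point_fun u K" and g: "g \<in> carrier G" and M: "M \<ge> 0"
    and dom: "\<And>f x. f \<in> P1 \<Longrightarrow> f (\<phi> (inv\<^bsub>G\<^esub> g) x) \<le> M * f x"
  shows "T g u = (\<lambda>x. u (\<phi> (inv\<^bsub>G\<^esub> g) x0) * u x)"
proof -
  define gi where "gi = \<phi> (inv\<^bsub>G\<^esub> g)"
  have uK: "u \<in> K" using ext by (simp add: extreme_point_fun_def)
  have domK: "f (gi x) \<le> M * f x" if "f \<in> K" for f x
  proof -
    have "K \<subseteq> (\<Inter>x. {f. f (gi x) \<le> M * f x})"
    proof (rule K_minimal)
      show "closed (\<Inter>x. {f. f (gi x) \<le> M * f x})" by (intro closed_INT ballI closed_lin_le)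
      show "P1 \<subseteq> (\<Inter>x. {f. f (gi x) \<le> M * f x})" using dom by (auto simp: gi_def)
    qed
    then show ?thesis using that by auto
  qed
  define \<epsilon> where "\<epsilon> = 1 / (2 * (M + 1))"
  have e0: "0 < \<epsilon>" using M by (simp add: \<epsilon>_def)
  have eM: "\<epsilon> * M < 1/2" using M by (simp add: \<epsilon>_def field_simps)
  have Tgf: "T g f = (\<lambda>x. f (gi x))" for f by (simp add: fun_eq_iff T_apply gi_def)
  have den2: "0 < f x0 - \<epsilon> * f (gi x0)" if "f \<in> K" for f
  proof -
    have "\<epsilon> * f (gi x0) \<le> \<epsilon> * (M * f x0)" using domK[OF that] e0 by simp
    then show ?thesis using K_x0[OF that] eM by (simp add: algebra_simps)
  qed
  define F1 where "F1 = (\<lambda>f::'x\<Rightarrow>real. \<lambda>x. f (gi x) / f (gi x0))"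
  define F2 where "F2 = (\<lambda>f::'x\<Rightarrow>real. \<lambda>x. (f x - \<epsilon> * f (gi x)) / (f x0 - \<epsilon> * f (gi x0)))"
  have F1K: "F1 ` K \<subseteq> K"
    unfolding K_def
  proof (rule image_closure_subset)
    show "continuous_on (closure P1) F1"
      unfolding F1_def
    proof (rule continuous_on_coordinatewise_then_product)
      fix x
      show "continuous_on (closure P1) (\<lambda>f. f (gi x) / f (gi x0))"
        using K_pos unfolding K_def by (intro continuous_on_divide eval_cont) (auto simp: less_imp_neq[symmetric])
    qed
    show "closed (closure P1)" by simp
    show "F1 ` P1 \<subseteq> closure P1"
    proof
      fix v assume "v \<in> F1 ` P1"
      then obtain f where f: "f \<in> P1" "v = F1 f" by auto
      have fP: "f \<in> P" using f(1) by (simp add: P1_def)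
      have TP: "T g f \<in> P" using T_pos[OF g fP] .
      have "nrm (T g f) \<in> P1"
        using TP pos_harmonic_pos[OF TP] by (intro nrm_P1) (auto simp: pos_harmonic_def)
      moreover have "nrm (T g f) = v" using f(2) by (simp add: nrm_def F1_def Tgf)
      ultimately show "v \<in> closure P1" using closure_subset by auto
    qed
  qed
  have F2K: "F2 ` K \<subseteq> K"
    unfolding K_def
  proof (rule image_closure_subset)
    show "continuous_on (closure P1) F2"
      unfolding F2_def
    proof (rule continuous_on_coordinatewise_then_product)
      fix x
      show "continuous_on (closure P1) (\<lambda>f. (f x - \<epsilon> * f (gi x)) / (f x0 - \<epsilon> * f (gi x0)))"
        using den2 unfolding K_def
        by (intro continuous_on_divide continuous_on_diff continuous_on_mult continuous_on_const eval_cont)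
           (auto simp: less_imp_neq[symmetric])
    qed
    show "closed (closure P1)" by simp
    show "F2 ` P1 \<subseteq> closure P1"
    proof
      fix v assume "v \<in> F2 ` P1"
      then obtain f where f: "f \<in> P1" "v = F2 f" by auto
      have fK: "f \<in> K" using f(1) P1_K by auto
      have fP: "f \<in> P" using f(1) by (simp add: P1_def)
      have TP: "T g f \<in> P" using T_pos[OF g fP] .
      define h where "h = (\<lambda>x. 1 * f x + (- \<epsilon>) * T g f x)"
      have hh: "harmonic b c h" unfolding h_def
        by (rule harmonic_lin) (use fP TP in \<open>auto simp: pos_harmonic_def\<close>)
      have hnn: "0 \<le> h x" for x
      proof -
        have "\<epsilon> * f (gi x) \<le> \<epsilon> * (M * f x)" using domK[OF fK] e0 by simp
        moreover have "\<epsilon> * M * f x \<le> f x"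
          using mult_left_le_one_le[of "f x" "\<epsilon> * M"] eM e0 M K_nonneg[OF fK, of x] by simp
        ultimately show ?thesis by (simp add: h_def Tgf algebra_simps)
      qed
      have hx0: "0 < h x0" using den2[OF fK] by (simp add: h_def Tgf)
      have "nrm h \<in> P1" using nrm_P1[OF hh] hnn hx0 by simp
      moreover have "nrm h = v" using f(2) by (simp add: nrm_def F2_def h_def Tgf)
      ultimately show "v \<in> closure P1" using closure_subset by auto
    qed
  qed
  define r where "r = u (gi x0)"
  have r0: "0 < r" using K_pos[OF uK] by (simp add: r_def)
  have rM: "r \<le> M" using domK[OF uK, of x0] K_x0[OF uK] by (simp add: r_def)
  define a where "a = \<epsilon> * r"
  have a0: "0 < a" using e0 r0 by (simp add: a_def)
  have a1: "a < 1"
  proof -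
    have "\<epsilon> * r \<le> \<epsilon> * M" using rM e0 by simp
    then show ?thesis using eM by (simp add: a_def)
  qed
  define v1 where "v1 = F1 u"
  define v2 where "v2 = F2 u"
  have v1K: "v1 \<in> K" using F1K uK by (auto simp: v1_def)
  have v2K: "v2 \<in> K" using F2K uK by (auto simp: v2_def)
  have den: "u x0 - \<epsilon> * u (gi x0) = 1 - a" using K_x0[OF uK] by (simp add: a_def r_def)
  have comb: "u = (\<lambda>x. (1 - a) * v2 x + a * v1 x)"
  proof
    fix x
    have "(1 - a) * v2 x = u x - \<epsilon> * u (gi x)" using a1 by (simp add: v2_def F2_def den)
    moreover have "a * v1 x = \<epsilon> * u (gi x)" using r0 by (simp add: v1_def F1_def a_def r_def[symmetric])
    ultimately show "u x = (1 - a) * v2 x + a * v1 x" by simp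
  qed
  have "v2 = v1"
  proof (rule ccontr)
    assume "v2 \<noteq> v1"
    have E: "\<forall>g\<in>K. \<forall>h\<in>K. \<forall>t. 0 < t \<and> t < 1 \<and> g \<noteq> h \<longrightarrow> u \<noteq> (\<lambda>x. (1 - t) * g x + t * h x)"
      using ext by (simp add: extreme_point_fun_def)
    have "u \<noteq> (\<lambda>x. (1 - a) * v2 x + a * v1 x)"
      using E[rule_format, OF v2K v1K, of a] a0 a1 \<open>v2 \<noteq> v1\<close> by simp
    then show False using comb by simp
  qed
  then have "u = v1" using comb by (simp add: algebra_simps)
  have "u x = u (gi x) / r" for x
  proof -
    have "u x = v1 x" using \<open>u = v1\<close> by simp
    also have "\<dots> = u (gi x) / r" by (simp add: v1_def F1_def r_def)
    finally show ?thesis .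
  qed
  then have ugi: "u (gi x) = r * u x" for x using r0 by (simp add: field_simps)
  have "T g u = (\<lambda>x. r * u x)" unfolding Tgf by (rule HOL.ext) (rule ugi)
  then show ?thesis by (simp add: r_def gi_def)
qed

end

context group begin

lemma cancel1: "x \<in> carrier G \<Longrightarrow> y \<in> carrier G \<Longrightarrow> x \<otimes> (inv x \<otimes> y) = y"
  by (simp add: m_assoc[symmetric])
lemma cancel2: "x \<in> carrier G \<Longrightarrow> y \<in> carrier G \<Longrightarrow> inv x \<otimes> (x \<otimes> y) = y"
  by (simp add: m_assoc[symmetric])

lemmas wsimps = m_assoc inv_mult_group cancel1 cancel2

lemma id_bound: "a \<in> carrier G \<Longrightarrow> g \<in> carrier G \<Longrightarrow>
  inv (a \<otimes> inv g \<otimes> inv a \<otimes> g) \<otimes> (a \<otimes> inv g) = inv g \<otimes> a"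
  by (simp add: wsimps)

lemma id_I1: "h1 \<in> carrier G \<Longrightarrow> A \<in> carrier G \<Longrightarrow> B \<in> carrier G \<Longrightarrow>
  (h1 \<otimes> A) \<otimes> B \<otimes> inv (h1 \<otimes> A) \<otimes> inv B =
  (h1 \<otimes> (A \<otimes> B \<otimes> inv A \<otimes> inv B) \<otimes> inv h1) \<otimes> (h1 \<otimes> B \<otimes> inv h1 \<otimes> inv B)"
  by (simp add: wsimps)

lemma id_I2: "h1 \<in> carrier G \<Longrightarrow> h2 \<in> carrier G \<Longrightarrow> B \<in> carrier G \<Longrightarrow>
  h1 \<otimes> (B \<otimes> h2) \<otimes> inv h1 \<otimes> inv (B \<otimes> h2) =
  (h1 \<otimes> B \<otimes> inv h1 \<otimes> inv B) \<otimes> (B \<otimes> (h1 \<otimes> h2 \<otimes> inv h1 \<otimes> inv h2) \<otimes> inv B)"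
  by (simp add: wsimps)

lemma id_I3: "h \<in> carrier G \<Longrightarrow> g \<in> carrier G \<Longrightarrow>
  h \<otimes> g \<otimes> inv h = (h \<otimes> g \<otimes> inv h \<otimes> inv g) \<otimes> g"
  by (simp add: wsimps)

lemma id_I4: "A \<in> carrier G \<Longrightarrow> B \<in> carrier G \<Longrightarrow>
  inv (A \<otimes> B \<otimes> inv A \<otimes> inv B) = B \<otimes> A \<otimes> inv B \<otimes> inv A"
  by (simp add: wsimps)

end

lemma real_one_lemma:
  fixes r A :: real
  assumes r: "0 < r" and A: "0 \<le> A" and b1: "\<And>n. r ^ (n*n) \<le> A ^ n" and b2: "\<And>n. (1/r) ^ (n*n) \<le> A ^ n"
  shows "r = 1"
proof -
  have gen: "\<not> 1 < s" if s: "\<And>n. s ^ (n*n) \<le> A ^ n" for s :: real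
  proof
    assume s1: "1 < s"
    have sb: "s ^ Suc n \<le> A" for n
    proof -
      have e: "(s ^ Suc n) ^ Suc n = s ^ (Suc n * Suc n)" by (rule power_mult[symmetric])
      have "(s ^ Suc n) ^ Suc n \<le> A ^ Suc n" unfolding e by (rule s)
      then show ?thesis by (rule power_le_imp_le_base) (rule A)
    qed
    obtain n where n: "A < s ^ n" using real_arch_pow[OF s1] by blast
    have "s ^ n \<le> s ^ Suc n" using s1 by (intro power_increasing) auto
    then show False using n sb[of n] by linarith
  qed
  have "\<not> 1 < r" using gen b1 by blast
  moreover have "\<not> 1 < 1/r" using gen b2 by blast
  ultimately show ?thesis using r by (simp add: field_simps)
qed

context ksetting begin

lemma pow_cl: "h \<in> carrier G \<Longrightarrow> h [^]\<^bsub>G\<^esub> (n::nat) \<in> carrier G"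
  by (rule monoid.nat_pow_closed[OF group.is_monoid[OF grp]])

lemma lc_pow: assumes "h \<in> lower_central G k" shows "h [^]\<^bsub>G\<^esub> (n::nat) \<in> lower_central G k"
proof (induction n)
  case 0 then show ?case using subgroup.one_closed[OF lc_subgroup] by (simp add: monoid.nat_pow_0[OF group.is_monoid[OF grp]])
next
  case (Suc n) then show ?case
    using subgroup.m_closed[OF lc_subgroup Suc assms] by (simp add: monoid.nat_pow_Suc[OF group.is_monoid[OF grp]])
qed

lemma bound_step:
  assumes R: "\<And>f w. f \<in> K \<Longrightarrow> w \<in> lower_central G (Suc k) \<Longrightarrow> T w f = f"
    and g: "g \<in> lower_central G k"
  shows "\<exists>M\<ge>0. \<forall>f\<in>P1. \<forall>x. f (\<phi> (inv\<^bsub>G\<^esub> g) x) \<le> M * f x"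
proof -
  have gc: "g \<in> carrier G" using lc_carrier[OF g] .
  have igc: "inv\<^bsub>G\<^esub> g \<in> carrier G" using inv_cl[OF gc] .
  obtain V where V: "finite V" "(\<Union>a\<in>carrier G. \<phi> a ` V) = UNIV" using coc by (auto simp: cocompact_def)
  have "\<forall>v. \<exists>C\<ge>0. \<forall>f\<in>P. \<forall>a\<in>carrier G. f (\<phi> a (\<phi> (inv\<^bsub>G\<^esub> g) v)) \<le> C * f (\<phi> a v)"
    using harnack2 by simp
  then obtain C where C: "\<forall>v. C v \<ge> 0 \<and> (\<forall>f\<in>P. \<forall>a\<in>carrier G. f (\<phi> a (\<phi> (inv\<^bsub>G\<^esub> g) v)) \<le> C v * f (\<phi> a v))"
    by (metis choice)
  define M where "M = (\<Sum>v\<in>V. C v)"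
  have M0: "M \<ge> 0" using C by (simp add: M_def sum_nonneg)
  have CM: "C v \<le> M" if "v \<in> V" for v using member_le_sum[of v V C] C V(1) that by (simp add: M_def)
  show ?thesis
  proof (intro exI[of _ M] conjI M0 ballI allI)
    fix f x assume f: "f \<in> P1"
    have fP: "f \<in> P" using f by (simp add: P1_def)
    have fK: "f \<in> K" using f P1_K by auto
    have "x \<in> (\<Union>a\<in>carrier G. \<phi> a ` V)" using V(2) by simp
    then obtain a v where a: "a \<in> carrier G" and v: "v \<in> V" and x: "x = \<phi> a v" by auto
    define cc where "cc = a \<otimes>\<^bsub>G\<^esub> inv\<^bsub>G\<^esub> g \<otimes>\<^bsub>G\<^esub> inv\<^bsub>G\<^esub> a \<otimes>\<^bsub>G\<^esub> g"
    have "a \<otimes>\<^bsub>G\<^esub> inv\<^bsub>G\<^esub> g \<otimes>\<^bsub>G\<^esub> inv\<^bsub>G\<^esub> a \<otimes>\<^bsub>G\<^esub> inv\<^bsub>G\<^esub> (inv\<^bsub>G\<^esub> g) \<in> lower_central G (Suc k)"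
      using lc_gen[OF a subgroup.m_inv_closed[OF lc_subgroup g]] .
    then have cc: "cc \<in> lower_central G (Suc k)" by (simp add: cc_def group.inv_inv[OF grp gc])
    have ccc: "cc \<in> carrier G" using lc_carrier[OF cc] .
    have icc: "inv\<^bsub>G\<^esub> cc \<in> carrier G" using inv_cl[OF ccc] .
    have Tcc: "T cc f = f" using R[OF fK cc] .
    have e1: "\<phi> (inv\<^bsub>G\<^esub> cc) (\<phi> a (\<phi> (inv\<^bsub>G\<^esub> g) v)) = \<phi> (inv\<^bsub>G\<^esub> g) x"
    proof -
      have idb: "inv\<^bsub>G\<^esub> cc \<otimes>\<^bsub>G\<^esub> (a \<otimes>\<^bsub>G\<^esub> inv\<^bsub>G\<^esub> g) = inv\<^bsub>G\<^esub> g \<otimes>\<^bsub>G\<^esub> a"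
        using group.id_bound[OF grp a gc] by (simp add: cc_def)
      have "\<phi> (inv\<^bsub>G\<^esub> cc) (\<phi> a (\<phi> (inv\<^bsub>G\<^esub> g) v)) = \<phi> (inv\<^bsub>G\<^esub> cc) (\<phi> (a \<otimes>\<^bsub>G\<^esub> inv\<^bsub>G\<^esub> g) v)"
        by (simp add: phi_mult[OF a igc])
      also have "\<dots> = \<phi> (inv\<^bsub>G\<^esub> cc \<otimes>\<^bsub>G\<^esub> (a \<otimes>\<^bsub>G\<^esub> inv\<^bsub>G\<^esub> g)) v"
        by (rule phi_mult[OF icc m_cl[OF a igc], symmetric])
      also have "\<dots> = \<phi> (inv\<^bsub>G\<^esub> g \<otimes>\<^bsub>G\<^esub> a) v" by (simp only: idb)
      also have "\<dots> = \<phi> (inv\<^bsub>G\<^esub> g) x" by (simp add: phi_mult[OF igc a] x)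
      finally show ?thesis .
    qed
    have "f (\<phi> (inv\<^bsub>G\<^esub> g) x) = T cc f (\<phi> a (\<phi> (inv\<^bsub>G\<^esub> g) v))"
      by (simp only: T_apply e1)
    also have "\<dots> = f (\<phi> a (\<phi> (inv\<^bsub>G\<^esub> g) v))" by (simp only: Tcc)
    also have "\<dots> \<le> C v * f (\<phi> a v)" using C fP a by simp
    also have "\<dots> \<le> M * f (\<phi> a v)"
      using CM[OF v] pos_harmonic_pos[OF fP, of "\<phi> a v"] by (simp add: mult_right_mono)
    finally show "f (\<phi> (inv\<^bsub>G\<^esub> g) x) \<le> M * f x" by (simp only: x)
  qed
qed

lemma scalar_all:
  assumes R: "\<And>f w. f \<in> K \<Longrightarrow> w \<in> lower_central G (Suc k) \<Longrightarrow> T w f = f"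
    and ext: "extreme_point_fun u K" and g: "g \<in> lower_central G k"
  shows "T g u = (\<lambda>x. u (\<phi> (inv\<^bsub>G\<^esub> g) x0) * u x)"
proof -
  obtain M where M: "M \<ge> 0" "\<forall>f\<in>P1. \<forall>x. f (\<phi> (inv\<^bsub>G\<^esub> g) x) \<le> M * f x"
    using bound_step[OF R g] by blast
  show ?thesis by (rule dominate[OF ext lc_carrier[OF g] M(1)]) (use M(2) in simp)
qed

lemma growth:
  assumes s: "s \<in> carrier G"
  obtains C where "C \<ge> 0" "\<And>u a n. u \<in> K \<Longrightarrow> a \<in> carrier G \<Longrightarrow> u (\<phi> (a \<otimes>\<^bsub>G\<^esub> s [^]\<^bsub>G\<^esub> (n::nat)) x0) \<le> C ^ n * u (\<phi> a x0)"
proof -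
  obtain C where C: "C \<ge> 0" "\<And>u a. u \<in> K \<Longrightarrow> a \<in> carrier G \<Longrightarrow> u (\<phi> a (\<phi> s x0)) \<le> C * u (\<phi> a x0)"
    using K_harnack[of "\<phi> s x0" x0] by blast
  have main: "u (\<phi> (a \<otimes>\<^bsub>G\<^esub> s [^]\<^bsub>G\<^esub> (n::nat)) x0) \<le> C ^ n * u (\<phi> a x0)" if u: "u \<in> K" and a: "a \<in> carrier G" for u a n
  proof (induction n)
    case 0 then show ?case using a by (simp add: monoid.nat_pow_0[OF group.is_monoid[OF grp]] monoid.r_one[OF group.is_monoid[OF grp]])
  next
    case (Suc n)
    have sn: "s [^]\<^bsub>G\<^esub> n \<in> carrier G" using pow_cl[OF s] .
    have an: "a \<otimes>\<^bsub>G\<^esub> s [^]\<^bsub>G\<^esub> n \<in> carrier G" using m_cl[OF a sn] .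
    have "a \<otimes>\<^bsub>G\<^esub> s [^]\<^bsub>G\<^esub> Suc n = (a \<otimes>\<^bsub>G\<^esub> s [^]\<^bsub>G\<^esub> n) \<otimes>\<^bsub>G\<^esub> s"
      using a s sn by (simp add: monoid.nat_pow_Suc[OF group.is_monoid[OF grp]] monoid.m_assoc[OF group.is_monoid[OF grp]])
    then have "u (\<phi> (a \<otimes>\<^bsub>G\<^esub> s [^]\<^bsub>G\<^esub> Suc n) x0) = u (\<phi> (a \<otimes>\<^bsub>G\<^esub> s [^]\<^bsub>G\<^esub> n) (\<phi> s x0))"
      using phi_mult[OF an s] by simp
    also have "\<dots> \<le> C * u (\<phi> (a \<otimes>\<^bsub>G\<^esub> s [^]\<^bsub>G\<^esub> n) x0)" using C(2)[OF u an] .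
    also have "\<dots> \<le> C * (C ^ n * u (\<phi> a x0))" using Suc C(1) by (rule mult_left_mono)
    finally show ?case by simp
  qed
  show ?thesis by (rule that[OF C(1)]) (rule main)
qed

lemma word_bound:
  assumes s: "s1 \<in> carrier G" "s2 \<in> carrier G" "s3 \<in> carrier G" "s4 \<in> carrier G"
  obtains A where "A \<ge> 0" "\<And>u n. u \<in> K \<Longrightarrow>
     u (\<phi> (s1 [^]\<^bsub>G\<^esub> (n::nat) \<otimes>\<^bsub>G\<^esub> s2 [^]\<^bsub>G\<^esub> n \<otimes>\<^bsub>G\<^esub> s3 [^]\<^bsub>G\<^esub> n \<otimes>\<^bsub>G\<^esub> s4 [^]\<^bsub>G\<^esub> n) x0) \<le> A ^ n"
proof -
  obtain C1 where C1: "C1 \<ge> 0" "\<And>u a n. u \<in> K \<Longrightarrow> a \<in> carrier G \<Longrightarrow> u (\<phi> (a \<otimes>\<^bsub>G\<^esub> s1 [^]\<^bsub>G\<^esub> (n::nat)) x0) \<le> C1 ^ n * u (\<phi> a x0)"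
    using growth[OF s(1)] by blast
  obtain C2 where C2: "C2 \<ge> 0" "\<And>u a n. u \<in> K \<Longrightarrow> a \<in> carrier G \<Longrightarrow> u (\<phi> (a \<otimes>\<^bsub>G\<^esub> s2 [^]\<^bsub>G\<^esub> (n::nat)) x0) \<le> C2 ^ n * u (\<phi> a x0)"
    using growth[OF s(2)] by blast
  obtain C3 where C3: "C3 \<ge> 0" "\<And>u a n. u \<in> K \<Longrightarrow> a \<in> carrier G \<Longrightarrow> u (\<phi> (a \<otimes>\<^bsub>G\<^esub> s3 [^]\<^bsub>G\<^esub> (n::nat)) x0) \<le> C3 ^ n * u (\<phi> a x0)"
    using growth[OF s(3)] by blast
  obtain C4 where C4: "C4 \<ge> 0" "\<And>u a n. u \<in> K \<Longrightarrow> a \<in> carrier G \<Longrightarrow> u (\<phi> (a \<otimes>\<^bsub>G\<^esub> s4 [^]\<^bsub>G\<^esub> (n::nat)) x0) \<le> C4 ^ n * u (\<phi> a x0)"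
    using growth[OF s(4)] by blast
  have main: "u (\<phi> (s1 [^]\<^bsub>G\<^esub> (n::nat) \<otimes>\<^bsub>G\<^esub> s2 [^]\<^bsub>G\<^esub> n \<otimes>\<^bsub>G\<^esub> s3 [^]\<^bsub>G\<^esub> n \<otimes>\<^bsub>G\<^esub> s4 [^]\<^bsub>G\<^esub> n) x0) \<le> (C1 * C2 * C3 * C4) ^ n"
    if u: "u \<in> K" for u n
  proof -
    define w1 where "w1 = s1 [^]\<^bsub>G\<^esub> n"
    define w2 where "w2 = w1 \<otimes>\<^bsub>G\<^esub> s2 [^]\<^bsub>G\<^esub> n"
    define w3 where "w3 = w2 \<otimes>\<^bsub>G\<^esub> s3 [^]\<^bsub>G\<^esub> n"
    have w1: "w1 \<in> carrier G" using pow_cl[OF s(1)] by (simp add: w1_def)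
    have w2: "w2 \<in> carrier G" using m_cl[OF w1 pow_cl[OF s(2)]] by (simp add: w2_def)
    have w3: "w3 \<in> carrier G" using m_cl[OF w2 pow_cl[OF s(3)]] by (simp add: w3_def)
    have w1e: "w1 = \<one>\<^bsub>G\<^esub> \<otimes>\<^bsub>G\<^esub> s1 [^]\<^bsub>G\<^esub> n"
      using w1 by (simp add: w1_def monoid.l_one[OF group.is_monoid[OF grp]])
    have nn: "\<And>y. 0 \<le> u y" using K_nonneg[OF u] .
    have "u (\<phi> (w3 \<otimes>\<^bsub>G\<^esub> s4 [^]\<^bsub>G\<^esub> n) x0) \<le> C4 ^ n * u (\<phi> w3 x0)" using C4(2)[OF u w3] .
    also have "\<dots> \<le> C4 ^ n * (C3 ^ n * u (\<phi> w2 x0))"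
      using C3(2)[OF u w2, of n] C4(1) by (simp add: w3_def mult_left_mono)
    also have "\<dots> \<le> C4 ^ n * (C3 ^ n * (C2 ^ n * u (\<phi> w1 x0)))"
      using C2(2)[OF u w1, of n] C4(1) C3(1) by (simp add: w2_def mult_left_mono)
    also have "\<dots> \<le> C4 ^ n * (C3 ^ n * (C2 ^ n * (C1 ^ n * u (\<phi> \<one>\<^bsub>G\<^esub> x0))))"
      using C1(2)[OF u one_cl, of n] C4(1) C3(1) C2(1) w1e by (simp add: mult_left_mono)
    also have "\<dots> = (C1 * C2 * C3 * C4) ^ n" using K_x0[OF u] by (simp add: phi_one power_mult_distrib)
    finally show ?thesis by (simp add: w3_def w2_def w1_def)
  qed
  show ?thesis by (rule that[of "C1 * C2 * C3 * C4"]) (use C1 C2 C3 C4 main in auto)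
qed

end

context ksetting begin

definition Rk where "Rk k \<longleftrightarrow> (\<forall>f\<in>K. \<forall>g\<in>lower_central G k. T g f = f)"

lemma scalar_all':
  assumes "Rk (Suc k)" "extreme_point_fun u K" "g \<in> lower_central G k"
  shows "T g u = (\<lambda>x. u (\<phi> (inv\<^bsub>G\<^esub> g) x0) * u x)"
  by (rule scalar_all[OF _ assms(2,3)]) (use assms(1) in \<open>simp add: Rk_def\<close>)

lemma scalar_to_inv:
  assumes RR: "Rk (Suc (Suc m))"
    and ext: "extreme_point_fun u K"
    and sc: "\<And>g. g \<in> lower_central G (Suc m) \<Longrightarrow> T g u = (\<lambda>x. u (\<phi> (inv\<^bsub>G\<^esub> g) x0) * u x)"
    and g: "g \<in> lower_central G (Suc m)"
  shows "T g u = u"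
proof (rule lc_T_generate[OF _ g])
  fix h1 h2 assume h1: "h1 \<in> carrier G" and h2: "h2 \<in> lower_central G m"
  have R: "\<And>f w. f \<in> K \<Longrightarrow> w \<in> lower_central G (Suc (Suc m)) \<Longrightarrow> T w f = f"
    using RR by (simp add: Rk_def)
  have uK: "u \<in> K" using ext by (simp add: extreme_point_fun_def)
  have h2c: "h2 \<in> carrier G" using lc_carrier[OF h2] .
  have mon: "monoid G" by (rule group.is_monoid[OF grp])
  have conj: "T (h \<otimes>\<^bsub>G\<^esub> g' \<otimes>\<^bsub>G\<^esub> inv\<^bsub>G\<^esub> h) u = T g' u"
    if h: "h \<in> carrier G" and g': "g' \<in> lower_central G (Suc m)" for h g'
  proof -
    have g'c: "g' \<in> carrier G" using lc_carrier[OF g'] .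
    define w where "w = h \<otimes>\<^bsub>G\<^esub> g' \<otimes>\<^bsub>G\<^esub> inv\<^bsub>G\<^esub> h \<otimes>\<^bsub>G\<^esub> inv\<^bsub>G\<^esub> g'"
    have w: "w \<in> lower_central G (Suc (Suc m))" unfolding w_def by (rule lc_gen[OF h g'])
    have wc: "w \<in> carrier G" using lc_carrier[OF w] .
    have "h \<otimes>\<^bsub>G\<^esub> g' \<otimes>\<^bsub>G\<^esub> inv\<^bsub>G\<^esub> h = w \<otimes>\<^bsub>G\<^esub> g'" unfolding w_def by (rule group.id_I3[OF grp h g'c])
    then have "T (h \<otimes>\<^bsub>G\<^esub> g' \<otimes>\<^bsub>G\<^esub> inv\<^bsub>G\<^esub> h) u = T w (T g' u)" using T_mult[OF wc g'c] by simp
    also have "\<dots> = T w (\<lambda>x. u (\<phi> (inv\<^bsub>G\<^esub> g') x0) * u x)" by (simp only: sc[OF g'])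
    also have "\<dots> = (\<lambda>x. u (\<phi> (inv\<^bsub>G\<^esub> g') x0) * T w u x)" by (rule T_scale)
    also have "\<dots> = T g' u" using R[OF uK w] sc[OF g'] by simp
    finally show ?thesis .
  qed
  define cm where "cm = h1 \<otimes>\<^bsub>G\<^esub> h2 \<otimes>\<^bsub>G\<^esub> inv\<^bsub>G\<^esub> h1 \<otimes>\<^bsub>G\<^esub> inv\<^bsub>G\<^esub> h2"
  have cm: "cm \<in> lower_central G (Suc m)" unfolding cm_def by (rule lc_gen[OF h1 h2])
  have cmc: "cm \<in> carrier G" using lc_carrier[OF cm] .
  define r where "r = u (\<phi> (inv\<^bsub>G\<^esub> cm) x0)"
  have r0: "0 < r" using K_pos[OF uK] by (simp add: r_def)
  have Tc: "T cm u = (\<lambda>x. r * u x)" using sc[OF cm] by (simp add: r_def)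
  define d where "d = (\<lambda>j::nat. h1 \<otimes>\<^bsub>G\<^esub> h2 [^]\<^bsub>G\<^esub> j \<otimes>\<^bsub>G\<^esub> inv\<^bsub>G\<^esub> h1 \<otimes>\<^bsub>G\<^esub> inv\<^bsub>G\<^esub> (h2 [^]\<^bsub>G\<^esub> j))"
  define e where "e = (\<lambda>(i::nat) (j::nat). h1 [^]\<^bsub>G\<^esub> i \<otimes>\<^bsub>G\<^esub> h2 [^]\<^bsub>G\<^esub> j \<otimes>\<^bsub>G\<^esub> inv\<^bsub>G\<^esub> (h1 [^]\<^bsub>G\<^esub> i) \<otimes>\<^bsub>G\<^esub> inv\<^bsub>G\<^esub> (h2 [^]\<^bsub>G\<^esub> j))"
  have dl: "d j \<in> lower_central G (Suc m)" for j unfolding d_def by (rule lc_gen[OF h1 lc_pow[OF h2]])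
  have dc: "d j \<in> carrier G" for j using lc_carrier[OF dl] .
  have el: "e i j \<in> lower_central G (Suc m)" for i j unfolding e_def by (rule lc_gen[OF pow_cl[OF h1] lc_pow[OF h2]])
  have ec: "e i j \<in> carrier G" for i j using lc_carrier[OF el] .
  have Td: "T (d j) u = (\<lambda>x. r ^ j * u x)" for j
  proof (induction j)
    case 0
    have "d 0 = \<one>\<^bsub>G\<^esub>" using h1
      by (simp add: d_def monoid.nat_pow_0[OF mon] monoid.r_one[OF mon] group.r_inv[OF grp] monoid.inv_one[OF mon] monoid.one_closed[OF mon])
    then show ?case by (simp add: T_one)
  next
    case (Suc j)
    define B where "B = h2 [^]\<^bsub>G\<^esub> j"
    have Bc: "B \<in> carrier G" using pow_cl[OF h2c] by (simp add: B_def)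
    have BcB: "B \<otimes>\<^bsub>G\<^esub> cm \<otimes>\<^bsub>G\<^esub> inv\<^bsub>G\<^esub> B \<in> carrier G" using m_cl[OF m_cl[OF Bc cmc] inv_cl[OF Bc]] .
    have "d (Suc j) = d j \<otimes>\<^bsub>G\<^esub> (B \<otimes>\<^bsub>G\<^esub> cm \<otimes>\<^bsub>G\<^esub> inv\<^bsub>G\<^esub> B)"
      using group.id_I2[OF grp h1 h2c Bc]
      by (simp add: d_def B_def cm_def monoid.nat_pow_Suc[OF mon])
    then have "T (d (Suc j)) u = T (d j) (T (B \<otimes>\<^bsub>G\<^esub> cm \<otimes>\<^bsub>G\<^esub> inv\<^bsub>G\<^esub> B) u)"
      using T_mult[OF dc BcB] by simp
    also have "\<dots> = T (d j) (\<lambda>x. r * u x)" by (simp only: conj[OF Bc cm] Tc)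
    also have "\<dots> = (\<lambda>x. r * T (d j) u x)" by (rule T_scale)
    also have "\<dots> = (\<lambda>x. r ^ Suc j * u x)" by (simp add: Suc mult.assoc)
    finally show ?case .
  qed
  have Te: "T (e i j) u = (\<lambda>x. r ^ (i * j) * u x)" for i j
  proof (induction i)
    case 0
    have "e 0 j = \<one>\<^bsub>G\<^esub>" using pow_cl[OF h2c, of j]
      by (simp add: e_def monoid.nat_pow_0[OF mon] monoid.l_one[OF mon] group.r_inv[OF grp] monoid.inv_one[OF mon] monoid.r_one[OF mon])
    then show ?case by (simp add: T_one)
  next
    case (Suc i)
    define A where "A = h1 [^]\<^bsub>G\<^esub> i"
    define B where "B = h2 [^]\<^bsub>G\<^esub> j"
    have Ac: "A \<in> carrier G" using pow_cl[OF h1] by (simp add: A_def)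
    have Bc: "B \<in> carrier G" using pow_cl[OF h2c] by (simp add: B_def)
    have hec: "h1 \<otimes>\<^bsub>G\<^esub> e i j \<otimes>\<^bsub>G\<^esub> inv\<^bsub>G\<^esub> h1 \<in> carrier G" using m_cl[OF m_cl[OF h1 ec] inv_cl[OF h1]] .
    have pw: "h1 [^]\<^bsub>G\<^esub> Suc i = h1 \<otimes>\<^bsub>G\<^esub> A" unfolding A_def by (rule monoid.nat_pow_Suc2[OF mon h1])
    have "e (Suc i) j = (h1 \<otimes>\<^bsub>G\<^esub> A) \<otimes>\<^bsub>G\<^esub> B \<otimes>\<^bsub>G\<^esub> inv\<^bsub>G\<^esub> (h1 \<otimes>\<^bsub>G\<^esub> A) \<otimes>\<^bsub>G\<^esub> inv\<^bsub>G\<^esub> B"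
      by (simp only: e_def B_def pw)
    also have "\<dots> = (h1 \<otimes>\<^bsub>G\<^esub> (A \<otimes>\<^bsub>G\<^esub> B \<otimes>\<^bsub>G\<^esub> inv\<^bsub>G\<^esub> A \<otimes>\<^bsub>G\<^esub> inv\<^bsub>G\<^esub> B) \<otimes>\<^bsub>G\<^esub> inv\<^bsub>G\<^esub> h1) \<otimes>\<^bsub>G\<^esub> (h1 \<otimes>\<^bsub>G\<^esub> B \<otimes>\<^bsub>G\<^esub> inv\<^bsub>G\<^esub> h1 \<otimes>\<^bsub>G\<^esub> inv\<^bsub>G\<^esub> B)"
      by (rule group.id_I1[OF grp h1 Ac Bc])
    also have "\<dots> = (h1 \<otimes>\<^bsub>G\<^esub> e i j \<otimes>\<^bsub>G\<^esub> inv\<^bsub>G\<^esub> h1) \<otimes>\<^bsub>G\<^esub> d j"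
      by (simp only: e_def d_def A_def B_def)
    finally have "e (Suc i) j = (h1 \<otimes>\<^bsub>G\<^esub> e i j \<otimes>\<^bsub>G\<^esub> inv\<^bsub>G\<^esub> h1) \<otimes>\<^bsub>G\<^esub> d j" .
    then have "T (e (Suc i) j) u = T (h1 \<otimes>\<^bsub>G\<^esub> e i j \<otimes>\<^bsub>G\<^esub> inv\<^bsub>G\<^esub> h1) (T (d j) u)"
      using T_mult[OF hec dc] by simp
    also have "\<dots> = T (h1 \<otimes>\<^bsub>G\<^esub> e i j \<otimes>\<^bsub>G\<^esub> inv\<^bsub>G\<^esub> h1) (\<lambda>x. r ^ j * u x)" by (simp only: Td)
    also have "\<dots> = (\<lambda>x. r ^ j * T (h1 \<otimes>\<^bsub>G\<^esub> e i j \<otimes>\<^bsub>G\<^esub> inv\<^bsub>G\<^esub> h1) u x)" by (rule T_scale)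
    also have "\<dots> = (\<lambda>x. r ^ j * T (e i j) u x)" by (simp only: conj[OF h1 el])
    also have "\<dots> = (\<lambda>x. r ^ (Suc i * j) * u x)" by (simp add: Suc power_add mult.assoc)
    finally show ?case .
  qed
  obtain A1 where A1: "A1 \<ge> 0" "\<And>u n. u \<in> K \<Longrightarrow>
     u (\<phi> (h1 [^]\<^bsub>G\<^esub> (n::nat) \<otimes>\<^bsub>G\<^esub> h2 [^]\<^bsub>G\<^esub> n \<otimes>\<^bsub>G\<^esub> (inv\<^bsub>G\<^esub> h1) [^]\<^bsub>G\<^esub> n \<otimes>\<^bsub>G\<^esub> (inv\<^bsub>G\<^esub> h2) [^]\<^bsub>G\<^esub> n) x0) \<le> A1 ^ n"
    using word_bound[OF h1 h2c inv_cl[OF h1] inv_cl[OF h2c]] by blast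
  obtain A2 where A2: "A2 \<ge> 0" "\<And>u n. u \<in> K \<Longrightarrow>
     u (\<phi> (h2 [^]\<^bsub>G\<^esub> (n::nat) \<otimes>\<^bsub>G\<^esub> h1 [^]\<^bsub>G\<^esub> n \<otimes>\<^bsub>G\<^esub> (inv\<^bsub>G\<^esub> h2) [^]\<^bsub>G\<^esub> n \<otimes>\<^bsub>G\<^esub> (inv\<^bsub>G\<^esub> h1) [^]\<^bsub>G\<^esub> n) x0) \<le> A2 ^ n"
    using word_bound[OF h2c h1 inv_cl[OF h2c] inv_cl[OF h1]] by blast
  have ee: "e n n = h1 [^]\<^bsub>G\<^esub> n \<otimes>\<^bsub>G\<^esub> h2 [^]\<^bsub>G\<^esub> n \<otimes>\<^bsub>G\<^esub> (inv\<^bsub>G\<^esub> h1) [^]\<^bsub>G\<^esub> n \<otimes>\<^bsub>G\<^esub> (inv\<^bsub>G\<^esub> h2) [^]\<^bsub>G\<^esub> n" for n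
    by (simp add: e_def group.nat_pow_inv[OF grp h1] group.nat_pow_inv[OF grp h2c])
  have eie: "inv\<^bsub>G\<^esub> (e n n) = h2 [^]\<^bsub>G\<^esub> n \<otimes>\<^bsub>G\<^esub> h1 [^]\<^bsub>G\<^esub> n \<otimes>\<^bsub>G\<^esub> (inv\<^bsub>G\<^esub> h2) [^]\<^bsub>G\<^esub> n \<otimes>\<^bsub>G\<^esub> (inv\<^bsub>G\<^esub> h1) [^]\<^bsub>G\<^esub> n" for n
    using group.id_I4[OF grp pow_cl[OF h1, of n] pow_cl[OF h2c, of n]]
    by (simp add: e_def group.nat_pow_inv[OF grp h1] group.nat_pow_inv[OF grp h2c])
  define AA where "AA = max A1 A2"
  have AA0: "0 \<le> AA" using A1(1) by (simp add: AA_def)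
  have b1: "r ^ (n*n) \<le> AA ^ n" for n
  proof -
    have "r ^ (n*n) = T (e n n) u x0" using Te[of n n] K_x0[OF uK] by simp
    also have "\<dots> = u (\<phi> (inv\<^bsub>G\<^esub> (e n n)) x0)" by (simp add: T_apply)
    also have "\<dots> \<le> A2 ^ n" unfolding eie by (rule A2(2)[OF uK])
    also have "\<dots> \<le> AA ^ n" using A2(1) by (intro power_mono) (auto simp: AA_def)
    finally show ?thesis .
  qed
  have b2: "(1/r) ^ (n*n) \<le> AA ^ n" for n
  proof -
    have ecn: "e n n \<in> carrier G" by (rule ec)
    have "u = T (inv\<^bsub>G\<^esub> (e n n)) (T (e n n) u)" by (rule T_inv_cancel[OF ecn, symmetric])
    also have "\<dots> = T (inv\<^bsub>G\<^esub> (e n n)) (\<lambda>x. r ^ (n*n) * u x)" by (simp only: Te)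
    also have "\<dots> = (\<lambda>x. r ^ (n*n) * T (inv\<^bsub>G\<^esub> (e n n)) u x)" by (rule T_scale)
    finally have "u x0 = r ^ (n*n) * T (inv\<^bsub>G\<^esub> (e n n)) u x0" by (rule fun_cong)
    then have "T (inv\<^bsub>G\<^esub> (e n n)) u x0 = (1/r) ^ (n*n)"
      using K_x0[OF uK] r0 by (simp add: power_one_over field_simps)
    moreover have "T (inv\<^bsub>G\<^esub> (e n n)) u x0 = u (\<phi> (e n n) x0)"
      by (simp add: T_apply group.inv_inv[OF grp ecn])
    moreover have "u (\<phi> (e n n) x0) \<le> A1 ^ n" unfolding ee by (rule A1(2)[OF uK])
    moreover have "A1 ^ n \<le> AA ^ n" using A1(1) by (intro power_mono) (auto simp: AA_def)
    ultimately show ?thesis by simp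
  qed
  have "r = 1" by (rule real_one_lemma[OF r0 AA0 b1 b2])
  then show "T (h1 \<otimes>\<^bsub>G\<^esub> h2 \<otimes>\<^bsub>G\<^esub> inv\<^bsub>G\<^esub> h1 \<otimes>\<^bsub>G\<^esub> inv\<^bsub>G\<^esub> h2) u = u"
    using Tc by (simp add: cm_def)
qed


lemma R_step: assumes R: "Rk (Suc (Suc m))" shows "Rk (Suc m)"
proof -
  have Rw: "\<And>f w. f \<in> K \<Longrightarrow> w \<in> lower_central G (Suc (Suc m)) \<Longrightarrow> T w f = f" using R by (simp add: Rk_def)
  have extinv: "T g u = u" if ext: "extreme_point_fun u K" and g: "g \<in> lower_central G (Suc m)" for u g
  proof (rule scalar_to_inv[OF R ext _ g])
    fix g' assume "g' \<in> lower_central G (Suc m)"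
    then show "T g' u = (\<lambda>x. u (\<phi> (inv\<^bsub>G\<^esub> g') x0) * u x)"
      by (rule scalar_all'[OF R ext])
  qed
  show ?thesis unfolding Rk_def
  proof (intro ballI)
    fix f g assume f: "f \<in> K" and g: "g \<in> lower_central G (Suc m)"
    show "T g f = f"
    proof (rule HOL.ext)
      fix x
      have e: "u (\<phi> (inv\<^bsub>G\<^esub> g) x) = u x" if "extreme_point_fun u K" for u
        using fun_cong[OF extinv[OF that g], of x] by (simp add: T_apply)
      have "f (\<phi> (inv\<^bsub>G\<^esub> g) x) \<le> f x" by (rule bauer[OF K_compact _ f]) (simp add: e)
      moreover have "f x \<le> f (\<phi> (inv\<^bsub>G\<^esub> g) x)" by (rule bauer[OF K_compact _ f]) (simp add: e)
      ultimately show "T g f x = f x" by (simp add: T_apply)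
    qed
  qed
qed

lemma R1: "Rk 1"
proof -
  obtain N where N: "lower_central G N = {\<one>\<^bsub>G\<^esub>}" using nil by (auto simp: nilpotent_group_def)
  have top: "Rk (Suc N)"
  proof -
    have "lower_central G (N + 1) = {\<one>\<^bsub>G\<^esub>}" by (rule lc_trivial_ge[OF N])
    then show ?thesis by (simp add: Rk_def T_one)
  qed
  have "d \<le> N \<Longrightarrow> Rk (Suc N - d)" for d
  proof (induction d)
    case 0 then show ?case using top by simp
  next
    case (Suc d)
    define m where "m = N - Suc d"
    have e1: "Suc N - d = Suc (Suc m)" using Suc.prems by (simp add: m_def)
    have e2: "Suc N - Suc d = Suc m" using Suc.prems by (simp add: m_def)
    have "Rk (Suc (Suc m))" using Suc e1 by simp
    then show ?case using R_step e2 by simp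
  qed
  from this[of N] show ?thesis by simp
qed

lemma extreme_mult: assumes ext: "extreme_point_fun u K" shows "multiplicative G \<phi> u"
proof -
  have uK: "u \<in> K" using ext by (simp add: extreme_point_fun_def)
  have Rw: "\<And>f w. f \<in> K \<Longrightarrow> w \<in> lower_central G (Suc 0) \<Longrightarrow> T w f = f" using R1 by (simp add: Rk_def)
  have sc: "T g u = (\<lambda>x. u (\<phi> (inv\<^bsub>G\<^esub> g) x0) * u x)" if g: "g \<in> carrier G" for g
  proof (rule scalar_all[where k=0 and u=u and g=g, OF Rw ext])
    show "g \<in> lower_central G 0" using g by simp
  qed
  define gam where "gam = (\<lambda>h. u (\<phi> h x0))"
  have pos: "0 < gam h" for h using K_pos[OF uK] by (simp add: gam_def)
  have hom: "gam (g \<otimes>\<^bsub>G\<^esub> h) = gam g * gam h" if g: "g \<in> carrier G" and h: "h \<in> carrier G" for g h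
  proof -
    have ig: "inv\<^bsub>G\<^esub> g \<in> carrier G" and ih: "inv\<^bsub>G\<^esub> h \<in> carrier G" using inv_cl g h by auto
    have gh: "g \<otimes>\<^bsub>G\<^esub> h \<in> carrier G" using m_cl[OF g h] .
    have "T (inv\<^bsub>G\<^esub> (g \<otimes>\<^bsub>G\<^esub> h)) u = T (inv\<^bsub>G\<^esub> h \<otimes>\<^bsub>G\<^esub> inv\<^bsub>G\<^esub> g) u"
      by (simp add: group.inv_mult_group[OF grp g h])
    also have "\<dots> = T (inv\<^bsub>G\<^esub> h) (T (inv\<^bsub>G\<^esub> g) u)" by (rule T_mult[OF ih ig])
    also have "\<dots> = T (inv\<^bsub>G\<^esub> h) (\<lambda>x. gam g * u x)"
      using sc[OF ig] by (simp add: gam_def group.inv_inv[OF grp g])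
    also have "\<dots> = (\<lambda>x. gam g * T (inv\<^bsub>G\<^esub> h) u x)" by (rule T_scale)
    also have "\<dots> = (\<lambda>x. gam g * (gam h * u x))"
      using sc[OF ih] by (simp add: gam_def group.inv_inv[OF grp h])
    finally have "T (inv\<^bsub>G\<^esub> (g \<otimes>\<^bsub>G\<^esub> h)) u x0 = gam g * (gam h * u x0)" by simp
    then show ?thesis using K_x0[OF uK] by (simp add: T_apply gam_def group.inv_inv[OF grp gh])
  qed
  show ?thesis
    unfolding multiplicative_def R_multiplicative_def pos_mult_hom_def
  proof (intro exI[of _ gam] conjI ballI)
    show "0 < gam g" for g by (rule pos)
    show "gam (g \<otimes>\<^bsub>G\<^esub> h) = gam g * gam h" if "g \<in> carrier G" "h \<in> carrier G" for g h
      using hom that by simp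
    show "T g u = (\<lambda>x. gam (inv\<^bsub>G\<^esub> g) * u x)" if "g \<in> carrier G" for g
      using sc[OF that] by (simp add: gam_def)
  qed
qed

end

theorem theorem1:
  fixes b :: "'x::countable \<Rightarrow> 'x \<Rightarrow> real" and c :: "'x \<Rightarrow> real"
    and G :: "('g, 'z) monoid_scheme" and \<phi> :: "'g \<Rightarrow> 'x \<Rightarrow> 'x" and x0 :: 'x
  assumes "graph_over b c"
    and "connected_graph b"
    and "nilpotent_group G"
    and "group_action G UNIV \<phi>"
    and "cocompact G \<phi>"
    and "H_invariant G \<phi> b c"
  defines "K \<equiv> closure {f \<in> pos_harmonic b c. f x0 = 1}"
  shows "(\<forall>f\<in>K. R_invariant G \<phi> (commutator_subgroup G) f)
       \<and> (\<forall>f. extreme_point_fun f K \<and> harmonic b c f \<longrightarrow> multiplicative G \<phi> f)"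
proof -
  have ns: "nsetting b c G \<phi>"
    unfolding nsetting_def nsetting_axioms_def gsetting_def using assms(1-6) by simp
  interpret ks: ksetting b c G \<phi> x0 using ns by (simp add: ksetting_def)
  have KK: "K = ks.K" by (simp add: K_def ks.K_def ks.P1_def)
  show ?thesis
  proof (intro conjI allI impI ballI)
    fix f assume "f \<in> K"
    then have fK: "f \<in> ks.K" by (simp add: KK)
    show "R_invariant G \<phi> (commutator_subgroup G) f"
      unfolding R_invariant_def ks.comm_eq using ks.R1 fK by (simp add: ks.Rk_def)
  next
    fix f assume "extreme_point_fun f K \<and> harmonic b c f"
    then show "multiplicative G \<phi> f" using ks.extreme_mult KK by simp
  qed
qed

end
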